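(* Let $m \equiv 1 \pmod 4$ with $m > 1$, $n = 3^m - 1$, $v = (3^{(m+1)/2}-1)/2$ and $\delta = (3^{(m-1)/2}+5)/2$. Then $\gcd(v,n) = 1$, and, setting $T_{(2,3,m)}(v) = \{ vi \bmod n : i \in T_{(2,3,m)}\}$, we have $\{n-(\delta-1), \ldots, n-2, n-1\} \subseteq T_{(2,3,m)}(v)$.
   Context: For an integer $0 \le j \le n-1$ with $3$-adic expansion $j = \sum_{t=0}^{m-1} j_t 3^t$, $j_t \in \{0,1,2\}$, let $w_3(j) = \sum_{t=0}^{m-1} j_t$. For distinct $i_1,i_2 \in \{0,1,2,3\}$, $T_{(i_1,i_2,m)} = \{1 \le j \le n-1 : w_3(j) \equiv i_1 \text{ or } i_2 \pmod 4\}$. For an integer $b$, $b \bmod n$ is the unique $b_0 \in \{0,\ldots,n-1\}$ with $b \equiv b_0 \pmod n$. *)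

theory Defs
  imports Main
begin

fun w3 :: "nat \<Rightarrow> nat" where
  "w3 j = (if j = 0 then 0 else j mod 3 + w3 (j div 3))"

declare w3.simps[simp del]

definition T :: "nat \<Rightarrow> nat \<Rightarrow> nat \<Rightarrow> nat set" where
  "T i1 i2 m = {j. 1 \<le> j \<and> j \<le> 3 ^ m - 2 \<and>
                   (w3 j mod 4 = i1 \<or> w3 j mod 4 = i2)}"

end

theory Submission
  imports Defs
begin

lemma w3_0[simp]: "w3 0 = 0" by (subst w3.simps) simp

lemma w3_step: "r < 3 \<Longrightarrow> w3 (3*a + r) = w3 a + r"
proof (cases "3*a + r = 0")
  case True
  then show ?thesis by (simp add: w3_0)
next
  case False
  assume r: "r < 3"
  have "w3 (3*a + r) = (3*a+r) mod 3 + w3 ((3*a+r) div 3)"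
    using False by (subst w3.simps) simp
  also have "\<dots> = r + w3 a" using r by simp
  finally show ?thesis by simp
qed

lemma w3_split: "b < 3^p \<Longrightarrow> w3 (a*3^p + b) = w3 a + w3 b"
proof (induction p arbitrary: b)
  case 0
  then show ?case by (simp add: w3_0)
next
  case (Suc p)
  have q: "b div 3 < 3^p" using Suc.prems by auto
  have "a*3^Suc p + b = 3*(a*3^p + b div 3) + b mod 3" by simp
  moreover have "w3 (3*(a*3^p + b div 3) + b mod 3) = w3 (a*3^p + b div 3) + b mod 3"
    by (rule w3_step) simp
  ultimately have "w3 (a*3^Suc p + b) = w3 (a*3^p + b div 3) + b mod 3"
    by metis
  also have "\<dots> = w3 a + (w3 (b div 3) + b mod 3)" using Suc.IH[OF q] by simp
  also have "w3 (b div 3) + b mod 3 = w3 b"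
    using w3_step[of "b mod 3" "b div 3"] by simp
  finally show ?case .
qed

lemma w3_compl: "x \<le> 3^m - 1 \<Longrightarrow> w3 (3^m - 1 - x) + w3 x = 2*m"
proof (induction m arbitrary: x)
  case 0
  then show ?case by (simp add: w3_0)
next
  case (Suc m)
  define q where "q = x div 3"
  define r where "r = x mod 3"
  have x: "x = 3*q + r" and r: "r < 3" unfolding q_def r_def by auto
  have p: "(3::nat)^m \<ge> 1" by simp
  define P where "P = (3::nat)^m"
  have P1: "P \<ge> 1" "3^Suc m = 3*P" unfolding P_def by simp_all
  have "3*q + r \<le> 3*P - 1" using Suc.prems x P1 by simp
  then have qle: "q \<le> 3^m - 1" using r P1 unfolding P_def[symmetric] by linarith
  have e: "3^Suc m - 1 - x = 3*(3^m - 1 - q) + (2 - r)" using x r qle P1 unfolding P_def[symmetric] by simp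
  have "w3 (3^Suc m - 1 - x) = w3 (3^m - 1 - q) + (2 - r)" unfolding e
    by (rule w3_step) simp
  moreover have "w3 x = w3 q + r" unfolding x using r by (rule w3_step)
  ultimately show ?case using Suc.IH[OF qle] r by simp
qed

lemma w3_parity: "w3 x mod 2 = x mod 2"
proof (induction x rule: less_induct)
  case (less x)
  show ?case
  proof (cases "x = 0")
    case True then show ?thesis by simp
  next
    case False
    define d where "d = x div 3"
    define r where "r = x mod 3"
    have x: "x = 3*d + r" and r: "r < 3" unfolding d_def r_def by auto
    have "d < x" using False unfolding d_def by simp
    then have h: "w3 d mod 2 = d mod 2" by (rule less.IH)
    have "w3 x = w3 d + r" unfolding x using r by (rule w3_step)
    have "(w3 d + r) mod 2 = (d + r) mod 2" using h by (metis mod_add_left_eq)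
    moreover have "(d + r) mod 2 = (3*d+r) mod 2" by presburger
    ultimately show ?thesis using \<open>w3 x = w3 d + r\<close> x by simp
  qed
qed

lemma mod_from_eq:
  fixes v i t n :: nat and c :: int
  assumes "int v * int i + int t = int n * c" "0 < t" "t \<le> n"
  shows "(v*i) mod n = n - t"
proof -
  have e: "int (v*i) = int (n - t) + int n * (c - 1)" using assms by (simp add: algebra_simps)
  have "int (v*i) mod int n = int (n - t) mod int n" unfolding e by simp
  also have "\<dots> = int (n - t)" using assms by (intro mod_pos_pos_trivial) auto
  finally show ?thesis by (metis of_nat_eq_iff zmod_int)
qed

lemma w3_1[simp]: "w3 1 = 1"
  using w3_step[of 1 0] by simp

lemma w3_Suc0[simp]: "w3 (Suc 0) = Suc 0"
  using w3_1 by (simp only: One_nat_def)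

lemma w3_2[simp]: "w3 2 = 2"
proof -
  have "w3 (3*0+2) = w3 0 + 2" by (rule w3_step) simp
  then show ?thesis by (simp only: mult_0_right add_0_left w3_0)
qed

lemma inT:
  assumes "1 \<le> y" "y < 3^m - 1" "w3 (3^m - 1 - y) mod 4 = 2 \<or> w3 (3^m - 1 - y) mod 4 = 3"
  shows "3^m - 1 - y \<in> T 2 3 m"
  using assms unfolding T_def by auto

lemma per_t:
  fixes k r t m n v K :: nat
  assumes m: "m = 4*k+1" and k: "k \<ge> 1" and r: "r \<ge> 1"
    and K: "K = 8*r+1" and pK: "3^(2*k) = K"
    and n: "n = 3^m - 1" and v: "v = 12*r+1"
    and t: "1 \<le> t" "t \<le> 4*r+2"
  shows "\<exists>i\<in>T 2 3 m. (v*i) mod n = n - t"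
proof -
  have p1: "(3::nat)^(2*k+1) = 3*K" using pK by simp
  have "(3::nat)^m = 3^(2*k+1) * 3^(2*k)" unfolding m by (simp add: power_add[symmetric])
  then have pm: "(3::nat)^m = 3*K*K" using p1 pK by simp
  have nval: "n = 192*r*r + 48*r + 2" unfolding n pm K by (simp add: algebra_simps)
  have rr: "r \<le> r*r" using r by simp
  have mainy: "\<exists>i\<in>T 2 3 m. (v*i) mod n = n - t"
    if y1: "1 \<le> y" and yn: "y < n" and w: "w3 y + w3 (n - y) = 2*m"
      and wm: "w3 (n - y) mod 4 = 2 \<or> w3 (n - y) mod 4 = 3"
      and eq: "int v * (int n - int y) + int t = int n * c" for y c
  proof
    show "n - y \<in> T 2 3 m" unfolding n using y1 yn wm n by (intro inT) auto
    have "int (n - y) = int n - int y" using yn by simp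
    then show "(v * (n - y)) mod n = n - t"
      using eq t yn by (intro mod_from_eq[where c=c]) (auto simp: nval)
  qed
  have compl: "w3 y + w3 (n - y) = 2*m" if "y \<le> n" for y
    using w3_compl[of y m] that unfolding n by simp
  show ?thesis
  proof (cases "even t")
    case True
    then obtain s where s: "t = 2*s" by blast
    define y where "y = t*3^(2*k+1) + t"
    have tl: "t < 3^(2*k+1)" using p1 K t by simp
    have wy: "w3 y = 2 * w3 t" unfolding y_def using w3_split[OF tl, of t] by simp
    have yv: "y = t*(24*r+4)" unfolding y_def p1 K by (simp add: algebra_simps)
    have "t*(24*r+4) \<le> (4*r+2)*(24*r+4)" using t by (intro mult_right_mono) auto
    then have "y \<le> 96*(r*r) + 64*r + 8" unfolding yv by (simp add: algebra_simps)
    moreover have "n = 192*(r*r) + 48*r + 2" unfolding nval by simp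
    ultimately have yn: "y < n" using rr r by linarith
    have y1: "1 \<le> y" using yv t by simp
    have wt: "w3 t mod 2 = 0" using w3_parity[of t] s by simp
    have w: "w3 y + w3 (n - y) = 2*m" using compl yn by simp
    show ?thesis
    proof (rule mainy[OF y1 yn w])
      show "w3 (n - y) mod 4 = 2 \<or> w3 (n - y) mod 4 = 3" using w wy wt m by presburger
      show "int v * (int n - int y) + int t = int n * (int v - 3 * int s)"
        unfolding nval yv v s by (simp add: algebra_simps)
    qed
  next
    case False
    then obtain s where s: "t = 2*s+1" by (metis oddE)
    show ?thesis
    proof (cases "t = 4*r+1")
      case True
      define y where "y = (2::nat)*3^(2*k) + 1"
      have one: "1 < (3::nat)^(2*k)" using pK K r by simp
      have wy: "w3 y = 3" unfolding y_def using w3_split[OF one, of 2] by (simp only: w3_2 w3_1)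
      have yv: "y = 16*r+3" unfolding y_def pK K by simp
      have yn: "y < n" unfolding yv nval using r by linarith
      have y1: "1 \<le> y" using yv by simp
      have w: "w3 y + w3 (n - y) = 2*m" using compl yn by simp
      show ?thesis
      proof (rule mainy[OF y1 yn w])
        show "w3 (n - y) mod 4 = 2 \<or> w3 (n - y) mod 4 = 3" using w wy m by presburger
        show "int v * (int n - int y) + int t = int n * (12 * int r)"
          unfolding nval yv v True by (simp add: algebra_simps)
      qed
    next
      case False
      then have tl: "t \<le> 4*r - 1" using s t by presburger
      define u where "u = t + 4*r"
      have ul: "u < 3^(2*k)" unfolding u_def pK K using tl r by simp
      have uodd: "u mod 2 = 1" unfolding u_def s by presburger
      define y where "y = u*3^(2*k+1) + (1*3^(2*k) + u)"
      have inner: "1*3^(2*k) + u < 3^(2*k+1)" using ul p1 pK by simp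
      have wy: "w3 y = 2 * w3 u + 1" unfolding y_def
        using w3_split[OF inner, of u] w3_split[OF ul, of 1] by simp
      have yv: "y = u*(24*r+3) + 8*r+1+u" unfolding y_def p1 pK K by (simp add: algebra_simps)
      have "u*(24*r+3) \<le> (8*r-1)*(24*r+3)" using tl r unfolding u_def
        by (intro mult_right_mono) auto
      moreover have "(8*r-1)*(24*r+3) + 3 = 192*r*r" using r
        by (cases r) (simp_all add: algebra_simps)
      moreover have "u \<le> 8*r-1" using tl r unfolding u_def by simp
      ultimately have yn: "y < n" unfolding yv nval using rr by linarith
      have y1: "1 \<le> y" using yv by simp
      have wu: "w3 u mod 2 = 1" using w3_parity[of u] uodd by simp
      have w: "w3 y + w3 (n - y) = 2*m" using compl yn by simp
      show ?thesis
      proof (rule mainy[OF y1 yn w])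
        show "w3 (n - y) mod 4 = 2 \<or> w3 (n - y) mod 4 = 3" using w wy wu m by presburger
        show "int v * (int n - int y) + int t = int n * (6 * int r - 1 - 3 * int s)"
          unfolding nval yv v u_def s by (simp add: algebra_simps)
      qed
    qed
  qed
qed

lemma odd12: "odd (g::nat) \<Longrightarrow> g \<noteq> 0 \<Longrightarrow> g \<le> 2 \<Longrightarrow> g = 1"
  by presburger

theorem lemma7:
  fixes m n v \<delta> :: nat
  assumes "m mod 4 = 1" and "m > 1"
    and "n = 3 ^ m - 1"
    and "v = (3 ^ ((m + 1) div 2) - 1) div 2"
    and "\<delta> = (3 ^ ((m - 1) div 2) + 5) div 2"
  shows "gcd v n = 1 \<and>
         {n - (\<delta> - 1) .. n - 1} \<subseteq> (\<lambda>i. (v * i) mod n) ` T 2 3 m"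
proof -
  define k where "k = m div 4"
  have m: "m = 4*k+1" using assms(1) unfolding k_def by presburger
  have k: "k \<ge> 1" using m assms(2) by simp
  define K where "K = (9::nat)^k"
  have pK: "3^(2*k) = K" unfolding K_def by (simp add: power_mult)
  have "(9::nat)^k mod 8 = ((9 mod 8)^k) mod 8" by (rule power_mod[symmetric])
  then have K8: "K mod 8 = 1" unfolding K_def by simp
  have K9: "K \<ge> 9" unfolding K_def using k
    by (metis power_increasing power_one_right zero_less_numeral one_le_numeral)
  define r where "r = K div 8"
  have K: "K = 8*r+1" unfolding r_def using K8 by (metis add.commute mult.commute div_mult_mod_eq)
  have r: "r \<ge> 1" using K K9 by simp
  have h1: "(m + 1) div 2 = 2*k+1" and h2: "(m - 1) div 2 = 2*k" using m by simp_all
  have p1: "(3::nat)^(2*k+1) = 3*K" using pK by simp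
  have v: "v = 12*r+1" unfolding assms(4) h1 p1 K by simp
  have d: "\<delta> = 4*r+3" unfolding assms(5) h2 pK K by simp
  have "(3::nat)^m = 3^(2*k+1) * 3^(2*k)" unfolding m by (simp add: power_add[symmetric])
  then have pm: "(3::nat)^m = 3*K*K" using p1 pK by simp
  have nval: "n = 192*r*r + 48*r + 2" unfolding assms(3) pm K by (simp add: algebra_simps)
  have g: "gcd v n = 1"
  proof -
    have e: "n*3 + 2 = v*(48*r+8)" unfolding nval v by (simp add: algebra_simps)
    have "gcd v n dvd v*(48*r+8)" by simp
    moreover have "gcd v n dvd n*3" by simp
    ultimately have a: "gcd v n dvd n*3 + 2" and b: "gcd v n dvd n*3" unfolding e[symmetric] by simp_all
    have "gcd v n dvd 2" using dvd_add_right_iff[OF b] a by blast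
    moreover have "odd (gcd v n)"
    proof
      assume "even (gcd v n)"
      then have "even v" using dvd_trans gcd_dvd1 by blast
      then show False unfolding v by simp
    qed
    moreover have "gcd v n \<noteq> 0" unfolding v by simp
    moreover have "gcd v n \<le> 2" using calculation(1) by (rule dvd_imp_le) simp
    ultimately show ?thesis using odd12 by blast
  qed
  have sub: "{n - (\<delta> - 1) .. n - 1} \<subseteq> (\<lambda>i. (v * i) mod n) ` T 2 3 m"
  proof
    fix x assume x: "x \<in> {n - (\<delta> - 1) .. n - 1}"
    define t where "t = n - x"
    have t: "1 \<le> t" "t \<le> 4*r+2" using x unfolding t_def d nval by auto
    have xt: "x = n - t" using x unfolding t_def nval by auto
    obtain i where "i \<in> T 2 3 m" "(v*i) mod n = n - t"
      using per_t[OF m k r K pK assms(3) v t] by blast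
    then show "x \<in> (\<lambda>i. (v * i) mod n) ` T 2 3 m" unfolding xt by force
  qed
  show ?thesis using g sub by simp
qed

end
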